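(* For $\ell\in\{0,\dots,N-1\}$ let $$\psi_\ell=\frac1{\sqrt{\|G_\ell\|_1}}\sum_{m\in\mathbb{Z}}G[mN+\ell]\,\phi_{mN+\ell}.$$ Then $\psi_\ell$ are eigenfunctions of $\mathcal{T}_K^N$ with $\mathcal{T}_K^N\psi_\ell=\|G_\ell\|_1\psi_\ell$; they satisfy $\|\psi_\ell\|_{\mathcal{H}}=1$ and $\|\psi_\ell\|=\frac{\|G_\ell\|}{\sqrt{\|G_\ell\|_1}}$; and they are orthogonal in $L^2_\mu$, i.e. $\langle\psi_\ell,\psi_k\rangle=0$ for $k\ne\ell$.
   Context: Let $\mathbb{T}=[-\pi,\pi)$, $j=\sqrt{-1}$, $\phi_k(x)=e^{jkx}$, $\mu$ uniform probability measure on $\mathbb{T}$, $\langle\cdot,\cdot\rangle$ and $\|\cdot\|$ the $L^2_\mu$ inner product and norm. Let $g$ be even, $M>0$, $K(x,x')=g(M((x-x')\bmod\mathbb{T}))$ positive definite with RKHS $\mathcal{H}$ (where $\theta\bmod\mathbb{T}:=((\theta+\pi)\bmod2\pi)-\pi$), $G[k]=\frac1{2\pi}\int_{-\pi}^{\pi}g(M\theta)e^{-jk\theta}d\theta\ge0$, $\sum_kG[k]<\infty$; the RKHS norm is $\|f\|_{\mathcal{H}}^2=\sum_k|\langle f,\phi_k\rangle|^2/G[k]$. For even $N$, grid points $x_i=\frac{2\pi}{N}i-\pi$, $i=0,\dots,N-1$, with invertible kernel matrix. $\mathcal{T}_K^Nf(x)=\frac1N\sum_{i=0}^{N-1}K(x,x_i)f(x_i)$.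 $\|G_\ell\|_1=\sum_m|G[mN+\ell]|$, $\|G_\ell\|^2=\sum_m|G[mN+\ell]|^2$. *)

theory Defs
  imports "HOL-Analysis.Analysis" "HOL-Library.Complex_Order" "Jordan_Normal_Form.Matrix"
begin

text \<open>theta mod T := ((theta + pi) mod 2 pi) - pi, with the real modulo written via floor.\<close>
definition tmod :: "real \<Rightarrow> real" where
  "tmod \<theta> = ((\<theta> + pi) - 2 * pi * of_int \<lfloor>(\<theta> + pi) / (2 * pi)\<rfloor>) - pi"

definition phi :: "int \<Rightarrow> real \<Rightarrow> complex" where
  "phi k x = exp (\<i> * of_int k * of_real x)"

definition kern :: "(real \<Rightarrow> real) \<Rightarrow> real \<Rightarrow> real \<Rightarrow> real \<Rightarrow> real" where
  "kern g M x x' = g (M * tmod (x - x'))"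

definition Gcoef :: "(real \<Rightarrow> real) \<Rightarrow> real \<Rightarrow> int \<Rightarrow> complex" where
  "Gcoef g M k = of_real (1 / (2 * pi)) *
     integral {-pi..pi} (\<lambda>\<theta>. of_real (g (M * \<theta>)) * exp (- \<i> * of_int k * of_real \<theta>))"

definition muT :: "real measure" where
  "muT = uniform_measure lborel {-pi..<pi}"

definition L2inner :: "(real \<Rightarrow> complex) \<Rightarrow> (real \<Rightarrow> complex) \<Rightarrow> complex" where
  "L2inner f h = (LINT x|muT. f x * cnj (h x))"

definition L2norm :: "(real \<Rightarrow> complex) \<Rightarrow> real" where
  "L2norm f = sqrt (LINT x|muT. (cmod (f x))\<^sup>2)"

definition rkhs_norm :: "(real \<Rightarrow> real) \<Rightarrow> real \<Rightarrow> (real \<Rightarrow> complex) \<Rightarrow> real" where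
  "rkhs_norm g M f = sqrt (\<Sum>\<^sub>\<infinity>k\<in>UNIV. (cmod (L2inner f (phi k)))\<^sup>2 / Re (Gcoef g M k))"

definition G1norm :: "(real \<Rightarrow> real) \<Rightarrow> real \<Rightarrow> nat \<Rightarrow> nat \<Rightarrow> real" where
  "G1norm g M N l = (\<Sum>\<^sub>\<infinity>m\<in>(UNIV::int set). cmod (Gcoef g M (m * int N + int l)))"

definition G2norm :: "(real \<Rightarrow> real) \<Rightarrow> real \<Rightarrow> nat \<Rightarrow> nat \<Rightarrow> real" where
  "G2norm g M N l = sqrt (\<Sum>\<^sub>\<infinity>m\<in>(UNIV::int set). (cmod (Gcoef g M (m * int N + int l)))\<^sup>2)"

definition grid :: "nat \<Rightarrow> nat \<Rightarrow> real" where
  "grid N i = 2 * pi / real N * real i - pi"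

definition TKN :: "(real \<Rightarrow> real) \<Rightarrow> real \<Rightarrow> nat \<Rightarrow> (real \<Rightarrow> complex) \<Rightarrow> real \<Rightarrow> complex" where
  "TKN g M N f x = of_real (1 / real N) *
     (\<Sum>i<N. of_real (kern g M x (grid N i)) * f (grid N i))"

definition psi :: "(real \<Rightarrow> real) \<Rightarrow> real \<Rightarrow> nat \<Rightarrow> nat \<Rightarrow> real \<Rightarrow> complex" where
  "psi g M N l x = of_real (1 / sqrt (G1norm g M N l)) *
     (\<Sum>\<^sub>\<infinity>m\<in>(UNIV::int set). Gcoef g M (m * int N + int l) * phi (m * int N + int l) x)"

definition kernel_matrix :: "(real \<Rightarrow> real) \<Rightarrow> real \<Rightarrow> nat \<Rightarrow> real mat" where
  "kernel_matrix g M N = mat N N (\<lambda>(i, k). kern g M (grid N i) (grid N k))"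

definition pos_def_kernel :: "(real \<Rightarrow> real \<Rightarrow> real) \<Rightarrow> bool" where
  "pos_def_kernel K \<longleftrightarrow> (\<forall>n (xs :: nat \<Rightarrow> real) (c :: nat \<Rightarrow> real).
     (\<forall>i<n. xs i \<in> {-pi..<pi}) \<longrightarrow> 0 \<le> (\<Sum>i<n. \<Sum>k<n. c i * c k * K (xs i) (xs k)))"

end

theory Submission
  imports Defs "HOL-Computational_Algebra.Polynomial"
begin


lemma phi_norm[simp]: "norm (phi k x) = 1"
  unfolding phi_def by simp

lemma phi_cnj: "cnj (phi k x) = phi (-k) x"
  unfolding phi_def by (simp add: exp_cnj)

lemma muT_density: "muT = density lborel (\<lambda>x. ennreal (indicator {-pi..<pi} x / (2*pi)))"
proof -
  have e: "emeasure lborel {-pi..<pi} = ennreal (2*pi)" by simp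
  have "(indicator {-pi..<pi} x :: ennreal) / ennreal (2*pi) = ennreal (indicator {-pi..<pi} x / (2*pi))" for x
    by (subst divide_ennreal[symmetric]) (auto simp: indicator_def)
  then show ?thesis unfolding muT_def uniform_measure_def e by presburger
qed


lemma phi_mult: "phi j x * phi k x = phi (j + k) x"
  unfolding phi_def by (simp add: exp_add[symmetric] algebra_simps)

lemma phi_neg_arg: "phi k (-x) = phi (-k) x"
  unfolding phi_def by simp

lemma continuous_phi[continuous_intros]: "continuous_on A (phi k)"
  unfolding phi_def by (intro continuous_intros)

lemma lint_muT:
  fixes f :: "real \<Rightarrow> 'b::euclidean_space"
  assumes "continuous_on UNIV f"
  shows "(LINT x|muT. f x) = (1/(2*pi)) *\<^sub>R integral {-pi..pi} f"
proof -
  have meas: "f \<in> borel_measurable lborel"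
    using assms by (simp add: borel_measurable_continuous_onI)
  have "(LINT x|muT. f x) = (LINT x|lborel. (indicator {-pi..<pi} x / (2*pi)) *\<^sub>R f x)"
    unfolding muT_density by (rule integral_density) (use meas in auto)
  also have "\<dots> = (LINT x|lborel. (1/(2*pi)) *\<^sub>R (indicator {-pi..<pi} x *\<^sub>R f x))"
    by (rule Bochner_Integration.integral_cong) auto
  also have "\<dots> = (1/(2*pi)) *\<^sub>R (LINT x|lborel. indicator {-pi..<pi} x *\<^sub>R f x)"
    by (rule integral_scaleR_right)
  also have "(LINT x|lborel. indicator {-pi..<pi} x *\<^sub>R f x) = (LINT x|lborel. indicator {-pi..pi} x *\<^sub>R f x)"
    by (rule integral_cong_AE)
      (use AE_lborel_singleton[of pi] meas in \<open>auto simp del: indicator_simps of_bool_eq intro!: borel_measurable_scaleR, auto simp: indicator_def\<close>)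
  also have "\<dots> = (LINT x : {-pi..pi}| lborel. f x)"
    by (simp add: set_lebesgue_integral_def)
  also have "\<dots> = integral {-pi..pi} f"
    by (rule set_borel_integral_eq_integral(2))
       (use borel_integrable_compact[of "{-pi..pi}" f] assms in \<open>auto simp: set_integrable_def intro: continuous_on_subset\<close>)
  finally show ?thesis .
qed

lemma phi_periodic: "phi k (x + 2*pi* of_int n) = phi k x"
proof -
  have "phi k (x + 2*pi* of_int n) = exp (\<i> * of_int k * of_real x + \<i> * (of_int (k*n) * (of_real pi * 2)))"
    unfolding phi_def by (simp add: algebra_simps)
  also have "\<dots> = phi k x" unfolding exp_plus_2pin phi_def ..
  finally show ?thesis .
qed

lemma phi_pi: "phi k pi = phi k (-pi)"
  using phi_periodic[of k "-pi" 1] by simp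

lemma phi_deriv: "(phi k has_vector_derivative (\<i> * of_int k * phi k x)) (at x within A)"
proof -
  have "((\<lambda>z. exp (\<i> * of_int k * z)) has_field_derivative (\<i> * of_int k * exp (\<i> * of_int k * of_real x))) (at (of_real x))"
    by (auto intro!: derivative_eq_intros)
  from has_vector_derivative_real_field[OF this] show ?thesis unfolding phi_def .
qed

lemma integral_phi: "integral {-pi..pi} (phi k) = (if k = 0 then 2 * pi else 0)"
proof (cases "k = 0")
  case True
  have "phi 0 = (\<lambda>x. 1)" by (auto simp: phi_def fun_eq_iff)
  then have "integral {-pi..pi} (phi k) = (2*pi) *\<^sub>R 1" using True by simp
  also have "\<dots> = 2 * pi" by (simp add: scaleR_conv_of_real)
  finally show ?thesis using True by simp
next
  case False
  have "((\<lambda>x. \<i> * of_int k * phi k x) has_integral (phi k pi - phi k (-pi))) {-pi..pi}"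
    by (rule fundamental_theorem_of_calculus) (auto intro: phi_deriv)
  then have "((\<lambda>x. \<i> * of_int k * phi k x) has_integral 0) {-pi..pi}"
    by (simp only: phi_pi diff_self)
  from has_integral_mult_right[OF this, of "1 / (\<i> * of_int k)"]
  have "((\<lambda>x. (1 / (\<i> * of_int k)) * (\<i> * of_int k * phi k x)) has_integral 0) {-pi..pi}"
    by simp
  then have "(phi k has_integral 0) {-pi..pi}" using False by simp
  then show ?thesis using False by (simp add: integral_unique)
qed

lemma summable_bound:
  fixes f :: "'i \<Rightarrow> complex"
  assumes a: "a summable_on UNIV" and bound: "\<And>k. norm (f k) \<le> a k"
  shows "f summable_on A" "(\<lambda>k. norm (f k)) summable_on A"
proof -
  have a0: "0 \<le> a k" for k using bound[of k] norm_ge_zero order_trans by blast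
  have "(\<lambda>k. norm (f k)) summable_on UNIV"
    by (rule summable_on_comparison_test[OF a]) (use bound in auto)
  then show *: "(\<lambda>k. norm (f k)) summable_on A" using summable_on_subset_banach by blast
  then show "f summable_on A" using abs_summable_summable by blast
qed

lemma infsum_tail_bound:
  fixes f :: "'i \<Rightarrow> complex"
  assumes a: "a summable_on UNIV" and bound: "\<And>k. norm (f k) \<le> a k" and F: "finite F"
  shows "norm (infsum f UNIV - sum f F) \<le> infsum a UNIV - sum a F"
proof -
  have fs: "f summable_on B" for B using summable_bound[OF a bound] by blast
  have as: "a summable_on B" for B using summable_on_subset_banach[OF a] by blast
  have "infsum f UNIV = infsum f (F \<union> (UNIV - F))" by simp
  also have "\<dots> = infsum f F + infsum f (UNIV - F)"
    by (rule infsum_Un_disjoint) (use fs in auto)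
  finally have 1: "infsum f UNIV - sum f F = infsum f (UNIV - F)" using F by simp
  have "infsum a UNIV = infsum a (F \<union> (UNIV - F))" by simp
  also have "\<dots> = infsum a F + infsum a (UNIV - F)"
    by (rule infsum_Un_disjoint) (use as in auto)
  finally have 2: "infsum a UNIV - sum a F = infsum a (UNIV - F)" using F by simp
  have "norm (infsum f (UNIV - F)) \<le> infsum a (UNIV - F)"
    by (rule norm_infsum_le[OF has_sum_infsum[OF fs] has_sum_infsum[OF as]]) (use bound in auto)
  then show ?thesis using 1 2 by simp
qed

lemma uniform_infsum:
  fixes f :: "'i \<Rightarrow> 'x \<Rightarrow> complex"
  assumes a: "a summable_on UNIV" and bound: "\<And>k x. x \<in> A \<Longrightarrow> norm (f k x) \<le> a k"
  shows "uniform_limit A (\<lambda>F x. sum (\<lambda>k. f k x) F) (\<lambda>x. infsum (\<lambda>k. f k x) UNIV) (finite_subsets_at_top UNIV)"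
  unfolding uniform_limit_iff
proof (intro allI impI)
  fix e :: real assume e: "e > 0"
  have lim: "((\<lambda>F. sum a F) \<longlongrightarrow> infsum a UNIV) (finite_subsets_at_top UNIV)"
    using infsum_tendsto[OF a] .
  then have ev: "\<forall>\<^sub>F F in finite_subsets_at_top UNIV. dist (sum a F) (infsum a UNIV) < e"
    using e tendstoD by blast
  have ev2: "\<forall>\<^sub>F F in finite_subsets_at_top UNIV. finite F" by auto
  show "\<forall>\<^sub>F F in finite_subsets_at_top UNIV. \<forall>x\<in>A. dist (\<Sum>k\<in>F. f k x) (\<Sum>\<^sub>\<infinity>k. f k x) < e"
    using ev ev2
  proof eventually_elim
    case (elim F)
    show ?case
    proof
      fix x assume x: "x \<in> A"
      have "dist (\<Sum>k\<in>F. f k x) (\<Sum>\<^sub>\<infinity>k. f k x) = norm ((\<Sum>\<^sub>\<infinity>k. f k x) - (\<Sum>k\<in>F. f k x))"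
        by (simp add: dist_norm norm_minus_commute)
      also have "\<dots> \<le> infsum a UNIV - sum a F"
        by (rule infsum_tail_bound[OF a _ elim(2)]) (use bound x in auto)
      also have "\<dots> < e" using elim(1) by (simp add: dist_real_def)
      finally show "dist (\<Sum>k\<in>F. f k x) (\<Sum>\<^sub>\<infinity>k. f k x) < e" .
    qed
  qed
qed

lemma continuous_infsum:
  fixes f :: "'i \<Rightarrow> 'x::topological_space \<Rightarrow> complex"
  assumes a: "a summable_on UNIV" and bound: "\<And>k x. x \<in> A \<Longrightarrow> norm (f k x) \<le> a k"
    and c: "\<And>k. continuous_on A (f k)"
  shows "continuous_on A (\<lambda>x. infsum (\<lambda>k. f k x) UNIV)"
  by (rule uniform_limit_theorem[OF _ uniform_infsum[OF a bound]])
     (auto intro!: continuous_on_sum c)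

lemma integral_infsum:
  fixes f :: "'i \<Rightarrow> real \<Rightarrow> complex"
  assumes a: "a summable_on UNIV" and bound: "\<And>k x. x \<in> {lo..hi} \<Longrightarrow> norm (f k x) \<le> a k"
    and c: "\<And>k. continuous_on {lo..hi} (f k)"
  shows "((\<lambda>k. integral {lo..hi} (f k)) has_sum integral {lo..hi} (\<lambda>x. infsum (\<lambda>k. f k x) UNIV)) UNIV"
proof -
  have cs: "continuous_on {lo..hi} (\<lambda>x. sum (\<lambda>k. f k x) F)" for F
    by (intro continuous_on_sum c)
  obtain I J where I: "\<And>F. ((\<lambda>x. sum (\<lambda>k. f k x) F) has_integral I F) {lo..hi}"
    and J: "((\<lambda>x. infsum (\<lambda>k. f k x) UNIV) has_integral J) {lo..hi}"
    and lim: "(I \<longlongrightarrow> J) (finite_subsets_at_top UNIV)"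
    by (rule uniform_limit_integral[OF uniform_infsum[OF a bound] cs]) auto
  have ev: "\<forall>\<^sub>F F in finite_subsets_at_top UNIV. I F = sum (\<lambda>k. integral {lo..hi} (f k)) F"
  proof (rule eventually_finite_subsets_at_top_weakI)
    fix F :: "'i set" assume F: "finite F"
    have "((\<lambda>x. sum (\<lambda>k. f k x) F) has_integral sum (\<lambda>k. integral {lo..hi} (f k)) F) {lo..hi}"
      by (rule has_integral_sum[OF F]) (rule integrable_integral, rule integrable_continuous_interval, rule c)
    then show "I F = sum (\<lambda>k. integral {lo..hi} (f k)) F" using I has_integral_unique by blast
  qed
  have "((\<lambda>F. sum (\<lambda>k. integral {lo..hi} (f k)) F) \<longlongrightarrow> J) (finite_subsets_at_top UNIV)"
    by (rule Lim_transform_eventually[OF lim ev])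
  moreover have "J = integral {lo..hi} (\<lambda>x. infsum (\<lambda>k. f k x) UNIV)"
    using J by (rule integral_unique[symmetric])
  ultimately show ?thesis unfolding has_sum_def by simp
qed

definition fs :: "(int \<Rightarrow> complex) \<Rightarrow> real \<Rightarrow> complex" where
  "fs c x = infsum (\<lambda>k. c k * phi k x) UNIV"

definition nsum :: "(int \<Rightarrow> complex) \<Rightarrow> real" where
  "nsum c = infsum (\<lambda>k. norm (c k)) UNIV"

lemma fs_cont:
  assumes "(\<lambda>k. norm (c k)) summable_on UNIV"
  shows "continuous_on A (fs c)"
  unfolding fs_def
  by (rule continuous_infsum[OF assms]) (auto simp: norm_mult intro!: continuous_intros)

lemma fs_bound:
  assumes "(\<lambda>k. norm (c k)) summable_on UNIV"
  shows "norm (fs c x) \<le> nsum c"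
  unfolding fs_def nsum_def
  by (rule norm_infsum_le[OF has_sum_infsum has_sum_infsum])
     (auto intro: summable_bound[OF assms] simp: norm_mult assms)

lemma integral_phi_mult: "integral {-pi..pi} (\<lambda>x. phi j x * phi k x) = (if j + k = 0 then 2 * pi else 0)"
  by (simp add: phi_mult integral_phi)

lemma has_sum_single_int:
  fixes v :: "'a::{comm_monoid_add,topological_space}"
  shows "((\<lambda>j. if j = k then v else 0) has_sum v) UNIV"
proof -
  have "((\<lambda>j. if j = k then v else 0) has_sum v) {k}" by (rule has_sum_finiteI) auto
  moreover have "((\<lambda>j. if j = k then v else 0) has_sum v) {k} \<longleftrightarrow> ((\<lambda>j. if j = k then v else 0) has_sum v) UNIV"
    by (rule has_sum_cong_neutral) auto
  ultimately show ?thesis by simp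
qed

lemma fs_coeff:
  fixes c :: "int \<Rightarrow> complex"
  assumes c: "(\<lambda>k. norm (c k)) summable_on UNIV"
  shows "integral {-pi..pi} (\<lambda>x. fs c x * phi k x) = of_real (2 * pi) * c (-k)"
proof -
  have "((\<lambda>j. integral {-pi..pi} (\<lambda>x. c j * phi j x * phi k x)) has_sum
          integral {-pi..pi} (\<lambda>x. infsum (\<lambda>j. c j * phi j x * phi k x) UNIV)) UNIV"
    by (rule integral_infsum[OF c]) (auto simp: norm_mult intro!: continuous_intros)
  moreover have "(\<lambda>j. integral {-pi..pi} (\<lambda>x. c j * phi j x * phi k x)) = (\<lambda>j. if j = -k then of_real (2 * pi) * c (-k) else 0)"
  proof
    fix j
    have "integral {-pi..pi} (\<lambda>x. c j * phi j x * phi k x) = c j * integral {-pi..pi} (\<lambda>x. phi j x * phi k x)"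
      by (simp add: mult.assoc)
    then show "integral {-pi..pi} (\<lambda>x. c j * phi j x * phi k x) = (if j = -k then of_real (2 * pi) * c (-k) else 0)"
      by (auto simp: integral_phi_mult)
  qed
  moreover have "(\<lambda>x. infsum (\<lambda>j. c j * phi j x * phi k x) UNIV) = (\<lambda>x. fs c x * phi k x)"
    unfolding fs_def by (simp add: infsum_cmult_left')
  ultimately have "((\<lambda>j. if j = -k then of_real (2 * pi) * c (-k) else 0) has_sum integral {-pi..pi} (\<lambda>x. fs c x * phi k x)) UNIV"
    by simp
  moreover have "((\<lambda>j. if j = -k then of_real (2 * pi) * c (-k) else 0) has_sum (of_real (2 * pi) * c (-k))) UNIV"
    by (rule has_sum_single_int)
  ultimately show ?thesis using has_sum_unique by blast
qed

lemma fs_cnj: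
  "cnj (fs d x) = fs (\<lambda>k. cnj (d (-k))) x"
proof -
  have "cnj (fs d x) = infsum (\<lambda>k. cnj (d k) * phi (-k) x) UNIV"
    unfolding fs_def infsum_cnj[symmetric] by (simp add: phi_cnj)
  also have "\<dots> = infsum (\<lambda>k. cnj (d (-k)) * phi k x) UNIV"
    by (rule infsum_reindex_bij_witness[of UNIV uminus uminus]) auto
  finally show ?thesis unfolding fs_def .
qed

lemma norm_summable_reflect:
  assumes "(\<lambda>k. norm (d k)) summable_on (UNIV::int set)"
  shows "(\<lambda>k. norm (cnj (d (-k)))) summable_on UNIV"
proof -
  have "(\<lambda>k. norm (d k)) summable_on (uminus ` UNIV)" using assms by simp
  then have "((\<lambda>k. norm (d k)) \<circ> uminus) summable_on UNIV"
    by (subst (asm) summable_on_reindex) auto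
  then show ?thesis by (simp add: o_def)
qed

lemma parseval:
  assumes c: "(\<lambda>k. norm (c k)) summable_on UNIV" and d: "(\<lambda>k. norm (d k)) summable_on UNIV"
  shows "integral {-pi..pi} (\<lambda>x. fs c x * cnj (fs d x)) = 2 * pi * infsum (\<lambda>k. c k * cnj (d k)) UNIV"
proof -
  define e where "e k = cnj (d (-k))" for k
  have e: "(\<lambda>k. norm (e k)) summable_on UNIV" unfolding e_def by (rule norm_summable_reflect[OF d])
  have ce: "cnj (fs d x) = fs e x" for x unfolding e_def by (rule fs_cnj)
  have a: "(\<lambda>j. norm (c j) * nsum e) summable_on UNIV"
    using summable_on_cmult_left[OF c] .
  have "((\<lambda>j. integral {-pi..pi} (\<lambda>x. c j * phi j x * fs e x)) has_sum
          integral {-pi..pi} (\<lambda>x. infsum (\<lambda>j. c j * phi j x * fs e x) UNIV)) UNIV"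
  proof (rule integral_infsum[OF a])
    show "norm (c j * phi j x * fs e x) \<le> norm (c j) * nsum e" for j x
      using fs_bound[OF e, of x] by (simp add: norm_mult mult_left_mono)
    show "continuous_on {-pi..pi} (\<lambda>x. c j * phi j x * fs e x)" for j
      by (intro continuous_intros fs_cont[OF e])
  qed
  moreover have "integral {-pi..pi} (\<lambda>x. c j * phi j x * fs e x) = of_real (2 * pi) * (c j * cnj (d j))" for j
  proof -
    have "(\<lambda>x. c j * phi j x * fs e x) = (\<lambda>x. c j * (fs e x * phi j x))"
      by (auto simp: fun_eq_iff ac_simps)
    then have "integral {-pi..pi} (\<lambda>x. c j * phi j x * fs e x) = c j * integral {-pi..pi} (\<lambda>x. fs e x * phi j x)"
      by (simp only: integral_mult_right)
    also have "\<dots> = c j * (of_real (2 * pi) * e (-j))" by (simp only: fs_coeff[OF e] minus_minus)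
    finally show ?thesis by (simp add: e_def)
  qed
  moreover have "(\<lambda>x. infsum (\<lambda>j. c j * phi j x * fs e x) UNIV) = (\<lambda>x. fs c x * cnj (fs d x))"
    unfolding ce unfolding fs_def by (simp add: infsum_cmult_left')
  ultimately have "((\<lambda>j. of_real (2 * pi) * (c j * cnj (d j))) has_sum integral {-pi..pi} (\<lambda>x. fs c x * cnj (fs d x))) UNIV"
    by simp
  then have "integral {-pi..pi} (\<lambda>x. fs c x * cnj (fs d x)) = infsum (\<lambda>j. of_real (2 * pi) * (c j * cnj (d j))) UNIV"
    by (simp add: infsumI)
  then show ?thesis by (simp add: infsum_cmult_right')
qed

lemma cos_power_orth:
  fixes f :: "real \<Rightarrow> real"
  assumes cont: "continuous_on {-pi..pi} f"
    and orth: "\<And>n::nat. integral {-pi..pi} (\<lambda>t. f t * cos (real n * t)) = 0"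
  shows "integral {-pi..pi} (\<lambda>t. f t * cos t ^ n * cos (of_int k * t)) = 0"
proof (induction n arbitrary: k)
  case 0
  have "cos (of_int k * t) = cos (real (nat \<bar>k\<bar>) * t)" for t
    by (cases "k \<ge> 0") (auto simp: minus_mult_left[symmetric] simp del: minus_mult_left mult_minus_left)
  then show ?case using orth[of "nat \<bar>k\<bar>"] by simp
next
  case (Suc n)
  have int: "(\<lambda>t. f t * cos t ^ n * cos (of_int j * t)) integrable_on {-pi..pi}" for j
    by (intro integrable_continuous_interval continuous_intros cont)
  have eq: "f t * cos t ^ Suc n * cos (of_int k * t) =
      (f t * cos t ^ n * cos (of_int (k - 1) * t)) / 2 + (f t * cos t ^ n * cos (of_int (k + 1) * t)) / 2" for t
  proof -
    have a: "cos (t - of_int k * t) = cos (of_int (k - 1) * t)"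
      by (metis cos_minus minus_diff_eq left_diff_distrib mult_1 of_int_1 of_int_diff)
    have "cos t * cos (of_int k * t) = (cos (t - of_int k * t) + cos (t + of_int k * t)) / 2"
      by (rule cos_times_cos)
    also have "\<dots> = (cos (of_int (k - 1) * t) + cos (of_int (k + 1) * t)) / 2"
      by (simp only: a) (simp add: algebra_simps)
    finally have X: "cos t * cos (of_int k * t) = (cos (of_int (k - 1) * t) + cos (of_int (k + 1) * t)) / 2" .
    have "f t * cos t ^ Suc n * cos (of_int k * t) = f t * cos t ^ n * (cos t * cos (of_int k * t))"
      by (simp add: algebra_simps)
    also have "\<dots> = f t * cos t ^ n * ((cos (of_int (k - 1) * t) + cos (of_int (k + 1) * t)) / 2)"
      by (simp only: X)
    finally show ?thesis by (simp add: field_simps)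
  qed
  have "integral {-pi..pi} (\<lambda>t. f t * cos t ^ Suc n * cos (of_int k * t)) =
    integral {-pi..pi} (\<lambda>t. (f t * cos t ^ n * cos (of_int (k - 1) * t)) / 2 + (f t * cos t ^ n * cos (of_int (k + 1) * t)) / 2)"
    by (simp only: eq)
  also have "\<dots> = integral {-pi..pi} (\<lambda>t. f t * cos t ^ n * cos (of_int (k - 1) * t)) / 2 +
       integral {-pi..pi} (\<lambda>t. f t * cos t ^ n * cos (of_int (k + 1) * t)) / 2"
    by (subst integral_add) (auto intro!: integrable_on_divide integrable_continuous_interval continuous_intros cont)
  also have "\<dots> = 0" using Suc.IH[of "k - 1"] Suc.IH[of "k + 1"] by (simp only:)
  finally show ?case .
qed

lemma poly_cos_orth:
  fixes f :: "real \<Rightarrow> real"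
  assumes cont: "continuous_on {-pi..pi} f"
    and orth: "\<And>n::nat. integral {-pi..pi} (\<lambda>t. f t * cos (real n * t)) = 0"
  shows "integral {-pi..pi} (\<lambda>t. f t * poly p (cos t) * cos t ^ n) = 0"
proof (induction p arbitrary: n)
  case 0
  then show ?case by simp
next
  case (pCons a p)
  have i1: "(\<lambda>t. f t * cos t ^ n) integrable_on {-pi..pi}"
    by (intro integrable_continuous_interval continuous_intros cont)
  have i2: "(\<lambda>t. f t * poly p (cos t) * cos t ^ Suc n) integrable_on {-pi..pi}"
    by (intro integrable_continuous_interval continuous_intros cont)
  have "integral {-pi..pi} (\<lambda>t. f t * poly (pCons a p) (cos t) * cos t ^ n) =
        integral {-pi..pi} (\<lambda>t. a * (f t * cos t ^ n) + f t * poly p (cos t) * cos t ^ Suc n)"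
    by (rule integral_cong) (simp add: algebra_simps)
  also have "\<dots> = a * integral {-pi..pi} (\<lambda>t. f t * cos t ^ n) + integral {-pi..pi} (\<lambda>t. f t * poly p (cos t) * cos t ^ Suc n)"
    by (subst integral_add[OF _ i2]) (auto intro!: integrable_continuous_interval continuous_intros cont)
  also have "integral {-pi..pi} (\<lambda>t. f t * cos t ^ n) = 0"
    using cos_power_orth[OF cont orth, of n 0] by simp
  also have "integral {-pi..pi} (\<lambda>t. f t * poly p (cos t) * cos t ^ Suc n) = 0"
    by (rule pCons.IH)
  finally show ?case by simp
qed

lemma cos_uniqueness:
  fixes f :: "real \<Rightarrow> real"
  assumes cont: "continuous_on {-pi..pi} f"
    and even: "\<And>t. t \<in> {-pi..pi} \<Longrightarrow> f (-t) = f t"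
    and orth: "\<And>n::nat. integral {-pi..pi} (\<lambda>t. f t * cos (real n * t)) = 0"
    and t: "t \<in> {-pi..pi}"
  shows "f t = 0"
proof -
  have "\<exists>B. \<forall>x\<in>{-pi..pi}. \<bar>f x\<bar> \<le> B"
    using compact_imp_bounded[OF compact_continuous_image[OF cont compact_Icc]]
    unfolding bounded_real by auto
  then obtain B where B': "\<forall>x\<in>{-pi..pi}. \<bar>f x\<bar> \<le> B" by blast
  have B: "\<And>x. x \<in> {-pi..pi} \<Longrightarrow> \<bar>f x\<bar> \<le> B" using B' by blast
  have B0: "0 \<le> B" using B[of 0] by auto
  have sq_int: "(\<lambda>x. f x * f x) integrable_on {-pi..pi}"
    by (intro integrable_continuous_interval continuous_intros cont)
  have le: "integral {-pi..pi} (\<lambda>x. f x * f x) \<le> B * e * (2 * pi)" if e: "e > 0" for e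
  proof -
    have "continuous_on {0..pi} f" using cont by (rule continuous_on_subset) auto
    define P where "P = (\<lambda>g::real\<Rightarrow>real. \<exists>p. \<forall>x. g x = poly p (cos x))"
    have P1: "P (\<lambda>x. c)" for c unfolding P_def by (rule exI[of _ "[:c:]"]) simp
    have P2: "continuous_on {0..pi} g" if "P g" for g
    proof -
      obtain p where "\<And>x. g x = poly p (cos x)" using \<open>P g\<close> unfolding P_def by blast
      then have "g = (\<lambda>x. poly p (cos x))" by (simp add: fun_eq_iff)
      then show ?thesis by (auto intro!: continuous_intros)
    qed
    have P3: "P (\<lambda>x. g x + h x)" if gh: "P g \<and> P h" for g h
    proof -
      obtain p q where "\<And>x. g x = poly p (cos x)" "\<And>x. h x = poly q (cos x)" using gh unfolding P_def by blast
      then have "\<forall>x. g x + h x = poly (p + q) (cos x)" by simp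
      then show ?thesis unfolding P_def by blast
    qed
    have P4: "P (\<lambda>x. g x * h x)" if gh: "P g \<and> P h" for g h
    proof -
      obtain p q where "\<And>x. g x = poly p (cos x)" "\<And>x. h x = poly q (cos x)" using gh unfolding P_def by blast
      then have "\<forall>x. g x * h x = poly (p * q) (cos x)" by simp
      then show ?thesis unfolding P_def by blast
    qed
    have P5: "\<exists>g. P g \<and> g x \<noteq> g y" if "x \<in> {0..pi} \<and> y \<in> {0..pi} \<and> x \<noteq> y" for x y
    proof -
      have "P cos" unfolding P_def by (rule exI[of _ "[:0,1:]"]) simp
      moreover have "cos x \<noteq> cos y" using that cos_inj_pi by auto
      ultimately show ?thesis by blast
    qed
    obtain g where g: "P g" and ge: "\<forall>x\<in>{0..pi}. \<bar>f x - g x\<bar> < e"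
      using Stone_Weierstrass_HOL[of "{0..pi}" P, OF compact_Icc P1 P2 P3 P4 P5 \<open>continuous_on {0..pi} f\<close> e] by blast
    have "\<exists>p. \<forall>x. g x = poly p (cos x)" using g unfolding P_def .
    then obtain p where p: "\<And>x. g x = poly p (cos x)" by blast
    have close: "\<bar>f x - poly p (cos x)\<bar> \<le> e" if x: "x \<in> {-pi..pi}" for x
    proof (cases "x \<ge> 0")
      case True
      then have "x \<in> {0..pi}" using x by auto
      then have "\<bar>f x - g x\<bar> < e" using ge by blast
      then show ?thesis using p by simp
    next
      case False
      then have "-x \<in> {0..pi}" using x by auto
      then have "\<bar>f (-x) - g (-x)\<bar> < e" using ge by blast
      then have "\<bar>f (-x) - poly p (cos (-x))\<bar> \<le> e" using p by simp
      then show ?thesis using even[OF x] by simp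
    qed
    have pint: "(\<lambda>x. f x * poly p (cos x)) integrable_on {-pi..pi}"
      by (intro integrable_continuous_interval continuous_intros cont)
    have o: "integral {-pi..pi} (\<lambda>x. f x * poly p (cos x)) = 0"
      using poly_cos_orth[OF cont orth, of p 0] by simp
    have "integral {-pi..pi} (\<lambda>x. f x * f x) = integral {-pi..pi} (\<lambda>x. f x * f x) - integral {-pi..pi} (\<lambda>x. f x * poly p (cos x))"
      by (simp only: o diff_zero)
    also have "\<dots> = integral {-pi..pi} (\<lambda>x. f x * f x - f x * poly p (cos x))"
      by (rule integral_diff[OF sq_int pint, symmetric])
    also have "\<dots> = integral {-pi..pi} (\<lambda>x. f x * (f x - poly p (cos x)))"
      by (rule integral_cong) (simp add: right_diff_distrib)
    also have "\<dots> \<le> integral {-pi..pi} (\<lambda>x. B * e)"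
    proof (rule integral_le)
      show "(\<lambda>x. f x * (f x - poly p (cos x))) integrable_on {-pi..pi}"
        by (intro integrable_continuous_interval continuous_intros cont)
      show "(\<lambda>x. B * e) integrable_on {-pi..pi}" by (intro integrable_continuous_interval continuous_intros)
      show "f x * (f x - poly p (cos x)) \<le> B * e" if x: "x \<in> {-pi..pi}" for x
      proof -
        have "f x * (f x - poly p (cos x)) \<le> \<bar>f x * (f x - poly p (cos x))\<bar>"
          by (rule abs_ge_self)
        also have "\<dots> = \<bar>f x\<bar> * \<bar>f x - poly p (cos x)\<bar>"
          by (rule abs_mult)
        also have "\<dots> \<le> B * e" using B[OF x] close[OF x] B0 by (intro mult_mono) auto
        finally show ?thesis .
      qed
    qed
    also have "\<dots> = B * e * (2 * pi)" by simp
    finally show ?thesis .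
  qed
  have z: "integral {-pi..pi} (\<lambda>x. f x * f x) \<le> 0"
  proof (rule field_le_epsilon)
    fix e :: real assume e: "e > 0"
    show "integral {-pi..pi} (\<lambda>x. f x * f x) \<le> 0 + e"
    proof (cases "B = 0")
      case True then show ?thesis using le[of 1] e by simp
    next
      case False
      then have Bp: "B > 0" using B0 by simp
      have "integral {-pi..pi} (\<lambda>x. f x * f x) \<le> B * (e / (B * 2 * pi)) * (2 * pi)"
        by (rule le) (use e Bp in simp)
      also have "\<dots> = e" using Bp by (simp add: field_simps)
      finally show ?thesis by simp
    qed
  qed
  have "integral {-pi..pi} (\<lambda>x. f x * f x) \<ge> 0"
    by (rule integral_nonneg[OF sq_int]) simp
  with z have "integral {-pi..pi} (\<lambda>x. f x * f x) = 0" by simp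
  moreover have "((\<lambda>x. f x * f x) has_integral integral {-pi..pi} (\<lambda>x. f x * f x)) {-pi..pi}"
    using sq_int by (rule integrable_integral)
  ultimately have "((\<lambda>x. f x * f x) has_integral 0) (cbox (-pi) pi)"
    by (simp)
  moreover have "continuous_on (cbox (-pi) pi) (\<lambda>x. f x * f x)"
    using cont by (auto intro!: continuous_intros)
  moreover have "box (-pi) pi \<noteq> {}" using pi_gt_zero by (simp add: not_le)
  moreover have "t \<in> cbox (-pi) pi" using t by (simp)
  moreover have "\<And>x. x \<in> box (-pi) pi \<Longrightarrow> 0 \<le> f x * f x" by simp
  ultimately have "f t * f t = 0"
    by (intro has_integral_0_cbox_imp_0[where f="\<lambda>x. f x * f x" and a="-pi" and b=pi and x=t]) auto
  then show ?thesis by simp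
qed




lemma G_facts:
  fixes G :: "int \<Rightarrow> complex"
  assumes "\<forall>k. G k \<ge> 0"
  shows "G k = of_real (norm (G k))" "Im (G k) = 0" "Re (G k) = norm (G k)"
proof -
  have i: "Im (G k) = 0" and r: "Re (G k) \<ge> 0" using assms unfolding less_eq_complex_def by auto
  show "Im (G k) = 0" by (rule i)
  show "Re (G k) = norm (G k)" using i r by (simp add: cmod_def)
  then show "G k = of_real (norm (G k))" using i by (simp add: complex_eq_iff)
qed

lemma gcont_comp:
  assumes M: "M > 0" and g_cont: "continuous_on {-M * pi..M * pi} g"
  shows "continuous_on {-pi..pi} (\<lambda>t. g (M * t))"
proof -
  have "continuous_on {-pi..pi} (\<lambda>t. M * t)" by (intro continuous_intros)
  moreover have "(\<lambda>t. M * t) ` {-pi..pi} \<subseteq> {-M * pi..M * pi}" using M by auto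
  ultimately show ?thesis using continuous_on_compose2[OF g_cont] by blast
qed

lemma Gcoef_integral:
  "integral {-pi..pi} (\<lambda>t. of_real (g (M * t)) * phi k t) = of_real (2 * pi) * Gcoef g M (-k)"
proof -
  have "(\<lambda>t. of_real (g (M * t)) * exp (- \<i> * of_int (-k) * of_real t)) = (\<lambda>t. of_real (g (M * t)) * phi k t)"
    by (auto simp: phi_def fun_eq_iff)
  then show ?thesis unfolding Gcoef_def by simp
qed

lemma Gcoef_even:
  assumes g_even: "\<forall>t. g (- t) = g t"
  shows "Gcoef g M (-k) = Gcoef g M k"
proof -
  have "integral {-pi..pi} (\<lambda>t. of_real (g (M * t)) * phi k t) =
        integral {-pi..pi} (\<lambda>t. of_real (g (M * (-t))) * phi k (-t))"
    using Henstock_Kurzweil_Integration.integral_reflect_real[of pi "-pi" "\<lambda>t. of_real (g (M * t)) * phi k t"] by (simp only: minus_minus)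
  also have "\<dots> = integral {-pi..pi} (\<lambda>t. of_real (g (M * t)) * phi (-k) t)"
    by (rule integral_cong) (simp add: g_even phi_neg_arg)
  finally show ?thesis using Gcoef_integral[of g M k] Gcoef_integral[of g M "-k"] by simp
qed

lemma fs_even:
  assumes "\<And>k. c (-k) = c k"
  shows "fs c (-x) = fs c x"
proof -
  have "fs c (-x) = infsum (\<lambda>k. c (-k) * phi (-k) x) UNIV"
    unfolding fs_def by (simp add: phi_neg_arg assms)
  also have "\<dots> = fs c x" unfolding fs_def
    by (rule infsum_reindex_bij_witness[of UNIV uminus uminus]) auto
  finally show ?thesis .
qed

lemma kernel_repr:
  assumes g_even: "\<forall>t. g (- t) = g t"
    and M_pos: "M > 0"
    and g_cont: "continuous_on {-M * pi..M * pi} g"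
    and G_nonneg: "\<forall>k. Gcoef g M k \<ge> 0"
    and G_summable: "Gcoef g M summable_on UNIV"
    and t: "t \<in> {-pi..pi}"
  shows "of_real (g (M * t)) = fs (Gcoef g M) t"
proof -
  define G where "G = Gcoef g M"
  define h where "h t = of_real (g (M * t)) - fs G t" for t
  have Gs: "(\<lambda>k. norm (G k)) summable_on UNIV"
    using G_summable unfolding G_def summable_on_iff_abs_summable_on_complex .
  have Geven: "G (-k) = G k" for k unfolding G_def by (rule Gcoef_even[OF g_even])
  have hc: "continuous_on {-pi..pi} h"
    unfolding h_def by (intro continuous_intros gcont_comp[OF M_pos g_cont] fs_cont[OF Gs])
  have heven: "h (-t) = h t" for t
    unfolding h_def using g_even fs_even[of G t] Geven by simp
  have hint: "(\<lambda>t. h t * phi k t) integrable_on {-pi..pi}" for k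
    by (intro integrable_continuous_interval continuous_intros hc)
  have hcoef: "integral {-pi..pi} (\<lambda>t. h t * phi k t) = 0" for k
  proof -
    have i1: "(\<lambda>t. of_real (g (M * t)) * phi k t) integrable_on {-pi..pi}"
      by (intro integrable_continuous_interval continuous_intros gcont_comp[OF M_pos g_cont])
    have i2: "(\<lambda>t. fs G t * phi k t) integrable_on {-pi..pi}"
      by (intro integrable_continuous_interval continuous_intros fs_cont[OF Gs])
    have "integral {-pi..pi} (\<lambda>t. h t * phi k t) =
          integral {-pi..pi} (\<lambda>t. of_real (g (M * t)) * phi k t - fs G t * phi k t)"
      unfolding h_def by (simp add: left_diff_distrib)
    also have "\<dots> = integral {-pi..pi} (\<lambda>t. of_real (g (M * t)) * phi k t) - integral {-pi..pi} (\<lambda>t. fs G t * phi k t)"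
      by (rule integral_diff[OF i1 i2])
    also have "\<dots> = 0"
      using Gcoef_integral[of g M k] fs_coeff[OF Gs, of k] unfolding G_def by simp
    finally show ?thesis .
  qed
  have hcos: "integral {-pi..pi} (\<lambda>t. h t * of_real (cos (real n * t))) = 0" for n :: nat
  proof -
    have "of_real (cos (real n * t)) = (phi (int n) t + phi (- int n) t) / 2" for t
    proof -
      have "(of_real (cos (real n * t)) :: complex) = cos (of_real (real n * t))" by (simp only: cos_of_real)
      also have "\<dots> = (exp (\<i> * of_real (real n * t)) + exp (- (\<i> * of_real (real n * t)))) / 2" by (rule cos_exp_eq)
      also have "\<dots> = (phi (int n) t + phi (- int n) t) / 2" by (simp add: phi_def algebra_simps)
      finally show ?thesis .
    qed
    then have "integral {-pi..pi} (\<lambda>t. h t * of_real (cos (real n * t))) =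
               integral {-pi..pi} (\<lambda>t. (h t * phi (int n) t + h t * phi (- int n) t) / 2)"
      by (simp add: algebra_simps add_divide_distrib)
    also have "\<dots> = (integral {-pi..pi} (\<lambda>t. h t * phi (int n) t) + integral {-pi..pi} (\<lambda>t. h t * phi (- int n) t)) / 2"
      using hint by (simp add: integral_add integral_divide)
    also have "\<dots> = 0" by (simp add: hcoef)
    finally show ?thesis .
  qed
  have hcint: "(\<lambda>t. h t * of_real (cos (real n * t))) integrable_on {-pi..pi}" for n :: nat
    by (intro integrable_continuous_interval continuous_intros hc)
  have re: "Re (h t) = 0"
  proof (rule cos_uniqueness[OF _ _ _ t])
    show "continuous_on {-pi..pi} (\<lambda>t. Re (h t))" by (intro continuous_intros hc)
    show "Re (h (-s)) = Re (h s)" for s by (simp add: heven)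
    show "integral {-pi..pi} (\<lambda>t. Re (h t) * cos (real n * t)) = 0" for n :: nat
      using integral_linear[OF hcint[of n] bounded_linear_Re] hcos[of n] by (simp add: o_def)
  qed
  have im: "Im (h t) = 0"
  proof (rule cos_uniqueness[OF _ _ _ t])
    show "continuous_on {-pi..pi} (\<lambda>t. Im (h t))" by (intro continuous_intros hc)
    show "Im (h (-s)) = Im (h s)" for s by (simp add: heven)
    show "integral {-pi..pi} (\<lambda>t. Im (h t) * cos (real n * t)) = 0" for n :: nat
      using integral_linear[OF hcint[of n] bounded_linear_Im] hcos[of n] by (simp add: o_def)
  qed
  have "h t = 0" using re im by (simp add: complex_eq_iff)
  then show ?thesis unfolding h_def G_def by simp
qed



lemma phi_scale: "phi (a * b) y = phi a (of_int b * y)"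
  unfolding phi_def by (simp add: algebra_simps)

lemma phi_zero_arg: "phi k 0 = 1" unfolding phi_def by simp

lemma phi_at_2pi_multiple: "phi a (2 * pi * of_int m) = 1"
  using phi_periodic[of a 0 m] by (simp add: phi_zero_arg)

lemma phi_grid_dvd:
  assumes N: "N > 0" "even N" and d: "int N dvd j"
  shows "phi j (grid N i) = 1"
proof -
  obtain q where q: "j = int N * q" using d by blast
  obtain r where r: "N = 2 * r" using N(2) by blast
  have "of_int (int N) * grid N i = 2 * pi * of_int (int i - int r)"
    unfolding grid_def using N r by (simp add: field_simps)
  then have "phi (q * int N) (grid N i) = 1"
    unfolding phi_scale using phi_at_2pi_multiple[of q "int i - int r"] by simp
  then show ?thesis using q by (simp add: mult.commute)
qed

lemma phi_add_arg: "phi k (x + y) = phi k x * phi k y"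
  unfolding phi_def by (simp add: algebra_simps exp_add[symmetric])

lemma phi_diff_arg: "phi k (x - y) = phi k x * phi (-k) y"
  using phi_add_arg[of k x "-y"] by (simp add: phi_neg_arg)

lemma phi_nat_mult_arg: "phi k (real n * y) = phi k y ^ n"
  unfolding phi_def by (simp add: exp_of_nat_mult[symmetric] algebra_simps)

lemma grid_sum:
  assumes N: "N > 0" "even N"
  shows "(\<Sum>i<N. phi j (grid N i)) = (if int N dvd j then of_nat N else 0)"
proof (cases "int N dvd j")
  case True
  then show ?thesis using phi_grid_dvd[OF N True] by simp
next
  case False
  define w where "w = phi j (2 * pi / real N)"
  have trm: "phi j (grid N i) = phi j (-pi) * w ^ i" for i
  proof -
    have "grid N i = -pi + real i * (2 * pi / real N)" unfolding grid_def by simp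
    then have "phi j (grid N i) = phi j (-pi + real i * (2 * pi / real N))" by (simp only:)
    also have "\<dots> = phi j (-pi) * phi j (real i * (2 * pi / real N))" by (rule phi_add_arg)
    also have "\<dots> = phi j (-pi) * w ^ i" unfolding w_def by (simp only: phi_nat_mult_arg)
    finally show ?thesis .
  qed
  have wN: "w ^ N = 1"
  proof -
    have "w ^ N = phi j (real N * (2 * pi / real N))" unfolding w_def phi_nat_mult_arg ..
    also have "\<dots> = phi j (2 * pi * of_int 1)" using N by simp
    also have "\<dots> = 1" by (rule phi_at_2pi_multiple)
    finally show ?thesis .
  qed
  have w1: "w \<noteq> 1"
  proof
    assume "w = 1"
    then have "exp (\<i> * of_int j * of_real (2 * pi / real N)) = 1" unfolding w_def phi_def .
    then obtain n :: int where n: "Im (\<i> * of_int j * of_real (2 * pi / real N)) = of_int (2 * n) * pi"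
      unfolding exp_eq_1 by blast
    then have "of_int j * (2 * pi / real N) = of_int (2 * n) * pi" by simp
    then have "real_of_int j = real_of_int n * real N" using N by (simp add: field_simps)
    then have "j = n * int N" by (metis of_int_eq_iff of_int_mult of_int_of_nat_eq)
    then show False using False by simp
  qed
  have "(\<Sum>i<N. phi j (grid N i)) = phi j (-pi) * (\<Sum>i<N. w ^ i)"
    by (simp add: trm sum_distrib_left)
  also have "(\<Sum>i<N. w ^ i) = 0" using geometric_sum[OF w1, of N] wN by simp
  finally show ?thesis using False by simp
qed



definition cl :: "nat \<Rightarrow> nat \<Rightarrow> (int \<Rightarrow> complex) \<Rightarrow> int \<Rightarrow> complex" where
  "cl N l G k = (if int N dvd (k - int l) then G k else 0)"

lemma reindex_image:
  assumes N: "N > 0"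
  shows "(\<lambda>m. m * int N + int l) ` UNIV = {k. int N dvd (k - int l)}"
proof -
  have "k \<in> range (\<lambda>m. m * int N + int l)" if d: "int N dvd (k - int l)" for k
  proof -
    obtain q where "k - int l = int N * q" using d by (auto elim: dvdE)
    then have "k = q * int N + int l" by (simp add: algebra_simps)
    then show ?thesis by blast
  qed
  then show ?thesis by auto
qed

lemma reindex_inj:
  assumes N: "N > 0"
  shows "inj (\<lambda>m::int. m * int N + int l)"
  using N by (auto intro!: injI)

lemma reindex_has_sum:
  fixes f :: "int \<Rightarrow> 'a::{comm_monoid_add,topological_space}"
  assumes N: "N > 0"
  shows "((\<lambda>m. f (m * int N + int l)) has_sum S) UNIV \<longleftrightarrow>
         ((\<lambda>k. if int N dvd (k - int l) then f k else 0) has_sum S) UNIV"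
proof -
  have "((\<lambda>m. f (m * int N + int l)) has_sum S) UNIV \<longleftrightarrow> (f has_sum S) ((\<lambda>m. m * int N + int l) ` UNIV)"
    using has_sum_reindex[OF reindex_inj[OF N, of l], of f S] by (simp add: o_def)
  also have "\<dots> \<longleftrightarrow> (f has_sum S) {k. int N dvd (k - int l)}" by (simp add: reindex_image[OF N])
  also have "\<dots> \<longleftrightarrow> ((\<lambda>k. if int N dvd (k - int l) then f k else 0) has_sum S) UNIV"
    by (rule has_sum_cong_neutral) auto
  finally show ?thesis .
qed

lemma reindex_infsum:
  fixes f :: "int \<Rightarrow> 'a::{comm_monoid_add,t2_space}"
  assumes N: "N > 0"
  shows "infsum (\<lambda>m. f (m * int N + int l)) UNIV = infsum (\<lambda>k. if int N dvd (k - int l) then f k else 0) UNIV"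
proof -
  have "infsum (\<lambda>m. f (m * int N + int l)) UNIV = infsum f ((\<lambda>m. m * int N + int l) ` UNIV)"
    using infsum_reindex[OF reindex_inj[OF N, of l], of f] by (simp add: o_def)
  also have "\<dots> = infsum f {k. int N dvd (k - int l)}" by (simp add: reindex_image[OF N])
  also have "\<dots> = infsum (\<lambda>k. if int N dvd (k - int l) then f k else 0) UNIV"
    by (rule infsum_cong_neutral) auto
  finally show ?thesis .
qed

lemma cl_summable:
  assumes "(\<lambda>k. norm (G k)) summable_on UNIV"
  shows "(\<lambda>k. norm (cl N l G k)) summable_on UNIV"
  by (rule summable_on_comparison_test[OF assms]) (auto simp: cl_def)

lemma psi_repr:
  assumes N: "N > 0"
  shows "psi g M N l x = of_real (1 / sqrt (G1norm g M N l)) * fs (cl N l (Gcoef g M)) x"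
proof -
  have "infsum (\<lambda>m. Gcoef g M (m * int N + int l) * phi (m * int N + int l) x) UNIV =
        infsum (\<lambda>k. if int N dvd (k - int l) then Gcoef g M k * phi k x else 0) UNIV"
    by (rule reindex_infsum[OF N, where f="\<lambda>k. Gcoef g M k * phi k x"])
  also have "\<dots> = fs (cl N l (Gcoef g M)) x"
    unfolding fs_def cl_def by (rule infsum_cong) simp
  finally show ?thesis unfolding psi_def by simp
qed

lemma G1_repr:
  assumes N: "N > 0"
  shows "G1norm g M N l = nsum (cl N l (Gcoef g M))"
  unfolding G1norm_def nsum_def reindex_infsum[OF N, where f="\<lambda>k. cmod (Gcoef g M k)"]
  by (rule infsum_cong) (simp add: cl_def)

lemma G2_repr:
  assumes N: "N > 0"
  shows "(G2norm g M N l)\<^sup>2 = infsum (\<lambda>k. (norm (cl N l (Gcoef g M) k))\<^sup>2) UNIV"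
proof -
  have nn: "0 \<le> infsum (\<lambda>m. (cmod (Gcoef g M (m * int N + int l)))\<^sup>2) UNIV"
    by (rule infsum_nonneg) simp
  have "(G2norm g M N l)\<^sup>2 = infsum (\<lambda>m. (cmod (Gcoef g M (m * int N + int l)))\<^sup>2) UNIV"
    unfolding G2norm_def using nn by simp
  also have "\<dots> = infsum (\<lambda>k. (norm (cl N l (Gcoef g M) k))\<^sup>2) UNIV"
    unfolding reindex_infsum[OF N, where f="\<lambda>k. (cmod (Gcoef g M k))\<^sup>2"]
    by (rule infsum_cong) (simp add: cl_def)
  finally show ?thesis .
qed

lemma has_sum_finite_sum:
  fixes F :: "'i \<Rightarrow> 'k \<Rightarrow> 'a::{topological_comm_monoid_add}"
  assumes "finite I" "\<And>i. i \<in> I \<Longrightarrow> (F i has_sum S i) A"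
  shows "((\<lambda>k. \<Sum>i\<in>I. F i k) has_sum (\<Sum>i\<in>I. S i)) A"
  using assms
proof (induction I rule: finite_induct)
  case empty then show ?case by simp
next
  case (insert i I)
  then show ?case by (simp add: has_sum_add)
qed

lemma fs_periodic: "fs c (y + 2 * pi * of_int n) = fs c y"
  unfolding fs_def by (simp add: phi_periodic)

lemma tmod_facts: "tmod y \<in> {-pi..pi}" "\<exists>n. tmod y = y + 2 * pi * of_int n"
proof -
  define q where "q = (y + pi) / (2 * pi)"
  have t: "tmod y = 2 * pi * (q - of_int \<lfloor>q\<rfloor>) - pi"
    unfolding tmod_def q_def by (simp add: field_simps)
  have "0 \<le> q - of_int \<lfloor>q\<rfloor>" "q - of_int \<lfloor>q\<rfloor> \<le> 1"
    by linarith+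
  then have "0 \<le> 2 * pi * (q - of_int \<lfloor>q\<rfloor>)" "2 * pi * (q - of_int \<lfloor>q\<rfloor>) \<le> 2 * pi"
    by (simp_all add: mult_le_cancel_left1)
  then show "tmod y \<in> {-pi..pi}" unfolding t by auto
  show "\<exists>n. tmod y = y + 2 * pi * of_int n"
    by (rule exI[of _ "- \<lfloor>q\<rfloor>"]) (simp add: tmod_def q_def algebra_simps)
qed

lemma kern_fs:
  assumes g_even: "\<forall>t. g (- t) = g t"
    and M_pos: "M > 0"
    and g_cont: "continuous_on {-M * pi..M * pi} g"
    and G_nonneg: "\<forall>k. Gcoef g M k \<ge> 0"
    and G_summable: "Gcoef g M summable_on UNIV"
  shows "of_real (kern g M x y) = fs (Gcoef g M) (x - y)"
proof -
  obtain n where n: "tmod (x - y) = (x - y) + 2 * pi * of_int n" using tmod_facts(2) by blast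
  have "of_real (kern g M x y) = fs (Gcoef g M) (tmod (x - y))"
    unfolding kern_def by (rule kernel_repr[OF assms tmod_facts(1)])
  also have "\<dots> = fs (Gcoef g M) (x - y)" unfolding n by (rule fs_periodic)
  finally show ?thesis .
qed

lemma grid_eigen:
  assumes g_even: "\<forall>t. g (- t) = g t"
    and M_pos: "M > 0"
    and g_cont: "continuous_on {-M * pi..M * pi} g"
    and G_nonneg: "\<forall>k. Gcoef g M k \<ge> 0"
    and G_summable: "Gcoef g M summable_on UNIV"
    and N: "N > 0" "even N"
  shows "(\<Sum>i<N. of_real (kern g M x (grid N i)) * phi (int l) (grid N i)) = of_nat N * fs (cl N l (Gcoef g M)) x"
proof -
  define G where "G = Gcoef g M"
  have Gs: "(\<lambda>k. norm (G k)) summable_on UNIV"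
    using G_summable unfolding G_def summable_on_iff_abs_summable_on_complex .
  define F where "F i k = G k * phi k x * phi (int l - k) (grid N i)" for i k
  have Fs: "(F i has_sum (of_real (kern g M x (grid N i)) * phi (int l) (grid N i))) UNIV" for i
  proof -
    have "F i summable_on UNIV"
      by (rule summable_bound(1)[OF Gs]) (simp add: F_def norm_mult)
    moreover have "infsum (F i) UNIV = of_real (kern g M x (grid N i)) * phi (int l) (grid N i)"
    proof -
      have "of_real (kern g M x (grid N i)) * phi (int l) (grid N i) = fs G (x - grid N i) * phi (int l) (grid N i)"
        unfolding G_def kern_fs[OF g_even M_pos g_cont G_nonneg G_summable] ..
      also have "\<dots> = infsum (\<lambda>k. G k * phi k (x - grid N i) * phi (int l) (grid N i)) UNIV"
        unfolding fs_def by (simp add: infsum_cmult_left')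
      also have "\<dots> = infsum (F i) UNIV"
        unfolding F_def by (rule infsum_cong) (simp add: phi_diff_arg mult.assoc phi_mult)
      finally show ?thesis by simp
    qed
    ultimately show ?thesis using has_sum_infsum by fastforce
  qed
  have "((\<lambda>k. \<Sum>i<N. F i k) has_sum (\<Sum>i<N. of_real (kern g M x (grid N i)) * phi (int l) (grid N i))) UNIV"
    by (rule has_sum_finite_sum) (auto intro: Fs)
  moreover have "(\<Sum>i<N. F i k) = of_nat N * (cl N l G k * phi k x)" for k
  proof -
    have "(\<Sum>i<N. F i k) = G k * phi k x * (\<Sum>i<N. phi (int l - k) (grid N i))"
      unfolding F_def by (simp add: sum_distrib_left)
    also have "\<dots> = of_nat N * (cl N l G k * phi k x)"
      unfolding grid_sum[OF N] cl_def using dvd_diff_commute[of "int N" "int l" k] by auto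
    finally show ?thesis .
  qed
  ultimately have 1: "((\<lambda>k. of_nat N * (cl N l G k * phi k x)) has_sum (\<Sum>i<N. of_real (kern g M x (grid N i)) * phi (int l) (grid N i))) UNIV"
    by simp
  have "(\<lambda>k. cl N l G k * phi k x) summable_on UNIV"
    by (rule summable_bound(1)[OF cl_summable[OF Gs, of N l]]) (simp add: norm_mult)
  then have 2: "((\<lambda>k. of_nat N * (cl N l G k * phi k x)) has_sum (of_nat N * fs (cl N l G) x)) UNIV"
    unfolding fs_def by (intro has_sum_cmult_right has_sum_infsum)
  show ?thesis using has_sum_unique[OF 1 2] unfolding G_def .
qed

lemma infsum_of_real':
  fixes f :: "'i \<Rightarrow> real"
  shows "infsum (\<lambda>k. complex_of_real (f k)) A = of_real (infsum f A)"
proof (cases "f summable_on A")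
  case True
  then show ?thesis using has_sum_of_real[OF has_sum_infsum[OF True]] infsumI by blast
next
  case False
  have "\<not> (\<lambda>k. complex_of_real (f k)) summable_on A"
  proof
    assume "(\<lambda>k. complex_of_real (f k)) summable_on A"
    from summable_on_Re[OF this] show False using False by simp
  qed
  then show ?thesis using False by (simp add: infsum_not_exists)
qed

lemma cl_real:
  assumes "\<forall>k. G k \<ge> 0"
  shows "cl N l G k = of_real (norm (cl N l G k))"
  unfolding cl_def using G_facts(1)[OF assms, of k] by auto

lemma fs_grid:
  assumes G_nonneg: "\<forall>k. G k \<ge> 0" and Gs: "(\<lambda>k. norm (G k)) summable_on UNIV"
    and N: "N > 0" "even N"
  shows "fs (cl N l G) (grid N i) = of_real (nsum (cl N l G)) * phi (int l) (grid N i)"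
proof -
  have "cl N l G k * phi k (grid N i) = cl N l G k * phi (int l) (grid N i)" for k
  proof (cases "int N dvd (k - int l)")
    case True
    have "phi k (grid N i) = phi (int l) (grid N i) * phi (k - int l) (grid N i)"
      by (simp add: phi_mult)
    also have "\<dots> = phi (int l) (grid N i)" using phi_grid_dvd[OF N True] by simp
    finally show ?thesis by simp
  next
    case False then show ?thesis by (simp add: cl_def)
  qed
  then have "fs (cl N l G) (grid N i) = infsum (\<lambda>k. cl N l G k * phi (int l) (grid N i)) UNIV"
    unfolding fs_def by (intro infsum_cong) blast
  also have "\<dots> = infsum (cl N l G) UNIV * phi (int l) (grid N i)"
    by (rule infsum_cmult_left')
  also have "infsum (cl N l G) UNIV = infsum (\<lambda>k. complex_of_real (norm (cl N l G k))) UNIV"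
    by (rule infsum_cong) (rule cl_real[OF G_nonneg])
  also have "\<dots> = of_real (nsum (cl N l G))" unfolding nsum_def by (rule infsum_of_real')
  finally show ?thesis .
qed

lemma invertible_kernel:
  fixes A :: "real mat"
  assumes inv: "invertible_mat A" and A: "A \<in> carrier_mat n n" and v: "v \<in> carrier_vec n"
    and z: "A *\<^sub>v v = 0\<^sub>v n"
  shows "v = 0\<^sub>v n"
proof -
  obtain B where AB: "A * B = 1\<^sub>m (dim_row A)" and BA: "B * A = 1\<^sub>m (dim_row B)"
    using inv unfolding invertible_mat_def inverts_mat_def by blast
  have "dim_col B = n" using arg_cong[OF AB, of dim_col] A by simp
  moreover have "dim_row B = n" using arg_cong[OF BA, of dim_col] A by simp
  ultimately have B: "B \<in> carrier_mat n n" by auto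
  have "v = 1\<^sub>m n *\<^sub>v v" using v by simp
  also have "\<dots> = (B * A) *\<^sub>v v" using BA B by simp
  also have "\<dots> = B *\<^sub>v (A *\<^sub>v v)" using B A v by simp
  also have "\<dots> = 0\<^sub>v n" unfolding z using B
    by (intro eq_vecI) (auto simp: scalar_prod_def)
  finally show ?thesis .
qed

lemma G1_pos:
  assumes g_even: "\<forall>t. g (- t) = g t"
    and M_pos: "M > 0"
    and g_cont: "continuous_on {-M * pi..M * pi} g"
    and G_nonneg: "\<forall>k. Gcoef g M k \<ge> 0"
    and G_summable: "Gcoef g M summable_on UNIV"
    and N: "N > 0" "even N"
    and K_inv: "invertible_mat (kernel_matrix g M N)"
  shows "G1norm g M N l > 0"
proof (rule ccontr)
  define G where "G = Gcoef g M"
  have Gs: "(\<lambda>k. norm (G k)) summable_on UNIV"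
    using G_summable unfolding G_def summable_on_iff_abs_summable_on_complex .
  assume "\<not> G1norm g M N l > 0"
  moreover have "G1norm g M N l \<ge> 0" unfolding G1norm_def by (rule infsum_nonneg) simp
  ultimately have G10: "nsum (cl N l G) = 0" using G1_repr[OF N(1), of g M l] unfolding G_def by simp
  define v where "v = vec N (\<lambda>k. Re (phi (int l) (grid N k)))"
  have "kernel_matrix g M N *\<^sub>v v = 0\<^sub>v N"
  proof (rule eq_vecI)
    fix i assume "i < dim_vec (0\<^sub>v N :: real vec)"
    then have i: "i < N" by simp
    have "(kernel_matrix g M N *\<^sub>v v) $ i = (\<Sum>k<N. kern g M (grid N i) (grid N k) * Re (phi (int l) (grid N k)))"
      using i unfolding kernel_matrix_def v_def
      by (simp add: scalar_prod_def lessThan_atLeast0)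
    also have "\<dots> = Re (\<Sum>k<N. of_real (kern g M (grid N i) (grid N k)) * phi (int l) (grid N k))"
      by (simp add: Re_sum)
    also have "\<dots> = Re (of_nat N * fs (cl N l G) (grid N i))"
      unfolding G_def grid_eigen[OF g_even M_pos g_cont G_nonneg G_summable N] ..
    also have "\<dots> = 0"
      unfolding fs_grid[OF G_nonneg[folded G_def] Gs N] G10 by simp
    finally show "(kernel_matrix g M N *\<^sub>v v) $ i = 0\<^sub>v N $ i" using i by simp
  qed (simp add: kernel_matrix_def)
  then have "v = 0\<^sub>v N"
    by (intro invertible_kernel[OF K_inv, of N v]) (auto simp: kernel_matrix_def v_def)
  moreover have "v $ 0 \<noteq> 0"
  proof -
    have "v $ 0 = Re (phi (int l) (-pi))" unfolding v_def using N by (simp add: grid_def)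
    also have "\<dots> = cos (real l * pi)" unfolding phi_def by (simp add: Re_exp)
    finally show ?thesis by simp
  qed
  ultimately show False using N by simp
qed

lemma L2inner_conv:
  assumes "continuous_on UNIV f" "continuous_on UNIV h"
  shows "L2inner f h = of_real (1 / (2 * pi)) * integral {-pi..pi} (\<lambda>x. f x * cnj (h x))"
proof -
  have "continuous_on UNIV (\<lambda>x. f x * cnj (h x))" using assms by (intro continuous_intros)
  then show ?thesis unfolding L2inner_def by (simp add: lint_muT scaleR_conv_of_real)
qed

lemma L2_fs_phi:
  assumes c: "(\<lambda>k. norm (c k)) summable_on UNIV"
  shows "L2inner (\<lambda>x. of_real a * fs c x) (phi k) = of_real a * c k"
proof -
  have "L2inner (\<lambda>x. of_real a * fs c x) (phi k) = of_real (1 / (2 * pi)) * integral {-pi..pi} (\<lambda>x. of_real a * fs c x * cnj (phi k x))"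
    by (rule L2inner_conv) (auto intro!: continuous_intros fs_cont[OF c])
  also have "integral {-pi..pi} (\<lambda>x. of_real a * fs c x * cnj (phi k x)) = of_real a * integral {-pi..pi} (\<lambda>x. fs c x * phi (-k) x)"
    by (simp add: phi_cnj mult.assoc)
  also have "\<dots> = of_real a * (of_real (2 * pi) * c k)" using fs_coeff[OF c, of "-k"] by simp
  finally show ?thesis by simp
qed

lemma L2_fs_fs:
  assumes c: "(\<lambda>k. norm (c k)) summable_on UNIV" and d: "(\<lambda>k. norm (d k)) summable_on UNIV"
  shows "L2inner (\<lambda>x. of_real a * fs c x) (\<lambda>x. of_real b * fs d x) = of_real (a * b) * infsum (\<lambda>k. c k * cnj (d k)) UNIV"
proof -
  have "L2inner (\<lambda>x. of_real a * fs c x) (\<lambda>x. of_real b * fs d x) = of_real (1 / (2 * pi)) * integral {-pi..pi} (\<lambda>x. of_real a * fs c x * cnj (of_real b * fs d x))"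
    by (rule L2inner_conv) (auto intro!: continuous_intros fs_cont[OF c] fs_cont[OF d])
  also have "integral {-pi..pi} (\<lambda>x. of_real a * fs c x * cnj (of_real b * fs d x)) = of_real (a * b) * integral {-pi..pi} (\<lambda>x. fs c x * cnj (fs d x))"
  proof -
    have "integral {-pi..pi} (\<lambda>x. of_real a * fs c x * cnj (of_real b * fs d x)) = integral {-pi..pi} (\<lambda>x. of_real (a * b) * (fs c x * cnj (fs d x)))"
      by (rule integral_cong) (simp add: ac_simps)
    then show ?thesis by simp
  qed
  also have "\<dots> = of_real (a * b) * (of_real (2 * pi) * infsum (\<lambda>k. c k * cnj (d k)) UNIV)"
    using parseval[OF c d] by simp
  finally show ?thesis by simp
qed

theorem lemma8:
  fixes g :: "real \<Rightarrow> real" and M :: real and N :: nat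
  assumes g_even: "\<forall>t. g (- t) = g t"
    and M_pos: "M > 0"
    and g_cont: "continuous_on {-M * pi..M * pi} g"
    and K_pd: "pos_def_kernel (kern g M)"
    and G_nonneg: "\<forall>k. Gcoef g M k \<ge> 0"
    and G_summable: "Gcoef g M summable_on UNIV"
    and N_even: "even N"
    and K_inv: "invertible_mat (kernel_matrix g M N)"
  shows "\<forall>l<N.
           (\<forall>x\<in>{-pi..<pi}. TKN g M N (psi g M N l) x = of_real (G1norm g M N l) * psi g M N l x)
         \<and> rkhs_norm g M (psi g M N l) = 1
         \<and> L2norm (psi g M N l) = G2norm g M N l / sqrt (G1norm g M N l)
         \<and> (\<forall>k<N. k \<noteq> l \<longrightarrow> L2inner (psi g M N l) (psi g M N k) = 0)"
proof (intro allI impI)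
  fix l assume l: "l < N"
  then have N: "N > 0" "even N" using N_even by auto
  define G where "G = Gcoef g M"
  have Gs: "(\<lambda>k. norm (G k)) summable_on UNIV"
    using G_summable unfolding G_def summable_on_iff_abs_summable_on_complex .
  have Gnn: "\<forall>k. G k \<ge> 0" using G_nonneg unfolding G_def .
  define c where "c l' = cl N l' G" for l'
  define s where "s l' = 1 / sqrt (G1norm g M N l')" for l'
  have cs: "(\<lambda>k. norm (c l' k)) summable_on UNIV" for l' unfolding c_def by (rule cl_summable[OF Gs])
  have psi_eq: "psi g M N l' = (\<lambda>x. of_real (s l') * fs (c l') x)" for l'
    unfolding s_def c_def G_def by (rule ext) (rule psi_repr[OF N(1)])
  have G1c: "G1norm g M N l' = nsum (c l')" for l' unfolding c_def G_def by (rule G1_repr[OF N(1)])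
  have G1pos: "G1norm g M N l > 0" by (rule G1_pos[OF g_even M_pos g_cont G_nonneg G_summable N K_inv])
  have s_sq: "(s l)\<^sup>2 * G1norm g M N l = 1" unfolding s_def using G1pos by (simp add: power_divide)
  have s_nn: "s l \<ge> 0" unfolding s_def using G1pos by simp
  have eig: "TKN g M N (psi g M N l) x = of_real (G1norm g M N l) * psi g M N l x" for x
  proof -
    have pg: "psi g M N l (grid N i) = of_real (s l) * of_real (G1norm g M N l) * phi (int l) (grid N i)" for i
      unfolding psi_eq c_def fs_grid[OF Gnn Gs N] G1c[symmetric, unfolded c_def] by simp
    have "TKN g M N (psi g M N l) x = of_real (1 / real N) *
        (of_real (s l) * of_real (G1norm g M N l) * (\<Sum>i<N. of_real (kern g M x (grid N i)) * phi (int l) (grid N i)))"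
      unfolding TKN_def pg by (simp add: sum_distrib_left ac_simps)
    also have "\<dots> = of_real (1 / real N) * (of_real (s l) * of_real (G1norm g M N l) * (of_nat N * fs (c l) x))"
      unfolding c_def G_def grid_eigen[OF g_even M_pos g_cont G_nonneg G_summable N] ..
    also have "\<dots> = of_real (G1norm g M N l) * psi g M N l x"
      unfolding psi_eq using N(1) by (simp add: field_simps)
    finally show ?thesis .
  qed
  have rk: "rkhs_norm g M (psi g M N l) = 1"
  proof -
    have t: "(cmod (L2inner (psi g M N l) (phi k)))\<^sup>2 / Re (Gcoef g M k) = (s l)\<^sup>2 * norm (c l k)" for k
    proof -
      have "L2inner (psi g M N l) (phi k) = of_real (s l) * c l k"
        unfolding psi_eq by (rule L2_fs_phi[OF cs])
      then have "(cmod (L2inner (psi g M N l) (phi k)))\<^sup>2 = (s l)\<^sup>2 * (norm (c l k))\<^sup>2"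
        by (simp add: norm_mult power_mult_distrib)
      moreover have "Re (Gcoef g M k) = norm (G k)" unfolding G_def by (rule G_facts(3)[OF G_nonneg])
      moreover have "(norm (c l k))\<^sup>2 / norm (G k) = norm (c l k)"
        unfolding c_def cl_def by (simp add: power2_eq_square)
      ultimately show ?thesis by (metis times_divide_eq_right)
    qed
    have "(\<Sum>\<^sub>\<infinity>k\<in>UNIV. (cmod (L2inner (psi g M N l) (phi k)))\<^sup>2 / Re (Gcoef g M k)) = (s l)\<^sup>2 * nsum (c l)"
      unfolding t nsum_def by (rule infsum_cmult_right')
    also have "\<dots> = 1" using s_sq G1c by simp
    finally show ?thesis unfolding rkhs_norm_def by simp
  qed
  have l2: "L2norm (psi g M N l) = G2norm g M N l / sqrt (G1norm g M N l)"
  proof -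
    have "complex_of_real (LINT x|muT. (cmod (psi g M N l x))\<^sup>2) = (LINT x|muT. complex_of_real ((cmod (psi g M N l x))\<^sup>2))"
      by (rule integral_complex_of_real[symmetric])
    also have "\<dots> = L2inner (psi g M N l) (psi g M N l)"
      unfolding L2inner_def complex_norm_square ..
    also have "\<dots> = of_real (s l * s l) * infsum (\<lambda>k. c l k * cnj (c l k)) UNIV"
      unfolding psi_eq by (rule L2_fs_fs[OF cs cs])
    also have "infsum (\<lambda>k. c l k * cnj (c l k)) UNIV = infsum (\<lambda>k. complex_of_real ((norm (c l k))\<^sup>2)) UNIV"
      unfolding complex_norm_square ..
    also have "\<dots> = of_real ((G2norm g M N l)\<^sup>2)"
      unfolding infsum_of_real' G2_repr[OF N(1)] c_def G_def ..
    finally have "(LINT x|muT. (cmod (psi g M N l x))\<^sup>2) = (s l * G2norm g M N l)\<^sup>2"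
      by (simp only: of_real_mult[symmetric] of_real_eq_iff) (simp add: power2_eq_square)
    moreover have "G2norm g M N l \<ge> 0" unfolding G2norm_def by (simp add: infsum_nonneg)
    ultimately have "L2norm (psi g M N l) = sqrt ((s l * G2norm g M N l)\<^sup>2)"
      unfolding L2norm_def by (simp only:)
    also have "\<dots> = \<bar>s l * G2norm g M N l\<bar>" by (rule real_sqrt_abs)
    also have "\<dots> = s l * G2norm g M N l" using s_nn \<open>G2norm g M N l \<ge> 0\<close> by (simp add: abs_mult)
    also have "\<dots> = G2norm g M N l / sqrt (G1norm g M N l)" unfolding s_def by simp
    finally show ?thesis .
  qed
  have orth: "L2inner (psi g M N l) (psi g M N k) = 0" if k: "k < N" "k \<noteq> l" for k
  proof -
    have z: "c l j * cnj (c k j) = 0" for j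
    proof (rule ccontr)
      assume "c l j * cnj (c k j) \<noteq> 0"
      then have d1: "int N dvd (j - int l)" and d2: "int N dvd (j - int k)"
        unfolding c_def cl_def by (auto split: if_splits)
      have "int N dvd ((j - int k) - (j - int l))" by (rule dvd_diff[OF d2 d1])
      moreover have "(j - int k) - (j - int l) = int l - int k" by simp
      ultimately have d: "int N dvd (int l - int k)" by simp
      have "int l - int k \<noteq> 0" using k by simp
      from dvd_imp_le_int[OF this d] have "int N \<le> \<bar>int l - int k\<bar>" by simp
      then show False using k l by linarith
    qed
    have "L2inner (psi g M N l) (psi g M N k) = of_real (s l * s k) * infsum (\<lambda>j. c l j * cnj (c k j)) UNIV"
      unfolding psi_eq by (rule L2_fs_fs[OF cs cs])
    also have "\<dots> = 0" by (simp add: z)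
    finally show ?thesis .
  qed
  show "(\<forall>x\<in>{-pi..<pi}. TKN g M N (psi g M N l) x = of_real (G1norm g M N l) * psi g M N l x)
         \<and> rkhs_norm g M (psi g M N l) = 1
         \<and> L2norm (psi g M N l) = G2norm g M N l / sqrt (G1norm g M N l)
         \<and> (\<forall>k<N. k \<noteq> l \<longrightarrow> L2inner (psi g M N l) (psi g M N k) = 0)"
    using eig rk l2 orth by blast
qed

end
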